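(* Let $n\geqslant 1$ and $1\leqslant i\leqslant n$. If $\sigma,\tau\in W_n$ satisfy $\sigma s_j\cdots s_nW_{n-1}=\tau s_j\cdots s_nW_{n-1}$ for all $j=i,\ldots,n+1$, then $\sigma^{-1}\tau\in W_{i-2}$. Equivalently, $W_{n-1}\cap(s_nW_{n-1}s_n)\cap\cdots\cap(s_i\cdots s_nW_{n-1}s_n\cdots s_i)=W_{i-2}$.
   Context: Standing setup: $\Gamma_1$ is an arbitrary finite Coxeter diagram with a preferred vertex $s_1$ (edge $\{s,t\}$ iff $m_{st}\geqslant3$; unlabelled edge means $m_{st}=3$, no edge means $m_{st}=2$). For $n\geqslant 2$, $\Gamma_n$ is obtained from $\Gamma_{n-1}$ by adding one new vertex $s_n$ joined by an unlabelled edge to $s_{n-1}$ and to no other vertex. $\Gamma_0$ is $\Gamma_1$ with $s_1$ deleted; $\Gamma_{-1}$ is $\Gamma_1$ with $s_1$ and all its neighbours deleted. For $n\geqslant -1$, $S_n$ is the vertex set of $\Gamma_n$ and $W_n$ the Coxeter group; $S_n=S_0\cup\{s_1,\dots,s_n\}$ and $W_m$ ($m\leqslant n$) is identified with the standard parabolic subgroup of $W_n$ generated by $S_m$. Convention: for $j=n+1$ the symbol $s_j\cdots s_nW_{n-1}$ means $W_{n-1}$. *)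

theory Defs
  imports Main "HOL-Library.Extended_Nat"
begin

text \<open>Vertices: Inl a for the vertices of Gamma_0 (a in S0), Inr k for s_k (k >= 1).
  A Coxeter matrix is a function to enat; the value infinity means no relation.\<close>

definition coxeter_matrix :: "'v set \<Rightarrow> ('v \<Rightarrow> 'v \<Rightarrow> enat) \<Rightarrow> bool" where
  "coxeter_matrix S m \<longleftrightarrow>
     (\<forall>s\<in>S. m s s = 1) \<and>
     (\<forall>s\<in>S. \<forall>t\<in>S. m s t = m t s) \<and>
     (\<forall>s\<in>S. \<forall>t\<in>S. s \<noteq> t \<longrightarrow> m s t \<ge> 2)"

inductive cox_eq :: "'v set \<Rightarrow> ('v \<Rightarrow> 'v \<Rightarrow> enat) \<Rightarrow> 'v list \<Rightarrow> 'v list \<Rightarrow> bool"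
  for S m where
  refl: "cox_eq S m w w"
| sym: "cox_eq S m u v \<Longrightarrow> cox_eq S m v u"
| trans: "cox_eq S m u v \<Longrightarrow> cox_eq S m v w \<Longrightarrow> cox_eq S m u w"
| cong: "cox_eq S m u v \<Longrightarrow> set x \<subseteq> S \<Longrightarrow> set y \<subseteq> S \<Longrightarrow> cox_eq S m (x @ u @ y) (x @ v @ y)"
| rel: "s \<in> S \<Longrightarrow> t \<in> S \<Longrightarrow> m s t = enat k \<Longrightarrow> cox_eq S m (concat (replicate k [s, t])) []"

text \<open>The Coxeter matrix of Gamma_n (for all n at once), built from the matrix m1 of Gamma_1.\<close>
definition gamma_M :: "(('a + nat) \<Rightarrow> ('a + nat) \<Rightarrow> enat) \<Rightarrow> ('a + nat) \<Rightarrow> ('a + nat) \<Rightarrow> enat" where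
  "gamma_M m1 x y = (case (x, y) of
      (Inl a, Inl b) \<Rightarrow> m1 x y
    | (Inl a, Inr j) \<Rightarrow> (if j = 1 then m1 x y else 2)
    | (Inr j, Inl a) \<Rightarrow> (if j = 1 then m1 x y else 2)
    | (Inr i, Inr j) \<Rightarrow> (if i = j then 1 else if i = j + 1 \<or> j = i + 1 then 3 else 2))"

text \<open>Vertex set S_k of Gamma_k for k >= -1 (k = -1: delete s_1 and its neighbours from Gamma_1).\<close>
definition gamma_S :: "'a set \<Rightarrow> (('a + nat) \<Rightarrow> ('a + nat) \<Rightarrow> enat) \<Rightarrow> int \<Rightarrow> ('a + nat) set" where
  "gamma_S S0 m1 k = (if k < 0 then Inl ` {a \<in> S0. m1 (Inl a) (Inr 1) = 2}
                      else Inl ` S0 \<union> Inr ` {1..nat k})"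

definition in_parabolic :: "'a set \<Rightarrow> (('a + nat) \<Rightarrow> ('a + nat) \<Rightarrow> enat) \<Rightarrow> nat \<Rightarrow> int \<Rightarrow> ('a + nat) list \<Rightarrow> bool" where
  "in_parabolic S0 m1 n k w \<longleftrightarrow>
     (\<exists>v. set v \<subseteq> gamma_S S0 m1 k \<and> cox_eq (gamma_S S0 m1 (int n)) (gamma_M m1) w v)"

definition chain_word :: "nat \<Rightarrow> nat \<Rightarrow> ('a + nat) list" where
  "chain_word j n = map Inr [j..<n+1]"

end

theory Submission imports Defs Complex_Main begin

locale cox =
  fixes S :: "'v set" and M :: "'v \<Rightarrow> 'v \<Rightarrow> enat"
  assumes finS: "finite S"
    and diag: "\<And>s. s \<in> S \<Longrightarrow> M s s = 1"
    and symm: "\<And>s t. s \<in> S \<Longrightarrow> t \<in> S \<Longrightarrow> M s t = M t s"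
    and offd: "\<And>s t. s \<in> S \<Longrightarrow> t \<in> S \<Longrightarrow> s \<noteq> t \<Longrightarrow> M s t \<ge> 2"
begin

abbreviation ceq (infix "\<simeq>" 50) where "u \<simeq> v \<equiv> cox_eq S M u v"

lemma ceq_refl[simp]: "u \<simeq> u" by (rule cox_eq.refl)
lemma ceq_sym: "u \<simeq> v \<Longrightarrow> v \<simeq> u" by (rule cox_eq.sym)
lemma ceq_trans[trans]: "u \<simeq> v \<Longrightarrow> v \<simeq> w \<Longrightarrow> u \<simeq> w" by (rule cox_eq.trans)

lemma ceq_filter: "u \<simeq> v \<Longrightarrow> filter (\<lambda>a. a \<notin> S) u = filter (\<lambda>a. a \<notin> S) v"
proof (induction rule: cox_eq.induct)
  case (cong u v x y)
  have "filter (\<lambda>a. a \<notin> S) x = []" "filter (\<lambda>a. a \<notin> S) y = []"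
    using cong.hyps by (auto simp: filter_empty_conv)
  then show ?case using cong.IH by simp
next
  case (rel s t k)
  then show ?case by (induction k) auto
qed auto

lemma ceq_S: "u \<simeq> v \<Longrightarrow> set u \<subseteq> S \<Longrightarrow> set v \<subseteq> S"
proof -
  assume "u \<simeq> v" "set u \<subseteq> S"
  then have "filter (\<lambda>a. a \<notin> S) u = []" by (auto simp: filter_empty_conv)
  then have "filter (\<lambda>a. a \<notin> S) v = []"
    using ceq_filter[OF \<open>u \<simeq> v\<close>] by simp
  then show ?thesis by (auto simp: filter_empty_conv)
qed

lemma ceq_app: "u \<simeq> u' \<Longrightarrow> v \<simeq> v' \<Longrightarrow> set u \<subseteq> S \<Longrightarrow> set v' \<subseteq> S \<Longrightarrow> u @ v \<simeq> u' @ v'"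
proof -
  assume a: "u \<simeq> u'" "v \<simeq> v'" "set u \<subseteq> S" "set v' \<subseteq> S"
  have "u @ v @ [] \<simeq> u @ v' @ []" using cox_eq.cong[where x=u and y="[]", OF a(2) a(3)] by simp
  moreover have "[] @ u @ v' \<simeq> [] @ u' @ v'" using cox_eq.cong[where x="[]" and y=v', OF a(1) _ a(4)] by simp
  ultimately show ?thesis by (auto intro: ceq_trans)
qed

lemma ceq_ctx: "u \<simeq> v \<Longrightarrow> set x \<subseteq> S \<Longrightarrow> set y \<subseteq> S \<Longrightarrow> x @ u @ y \<simeq> x @ v @ y"
  by (rule cox_eq.cong)

lemma ceq_ss: "a \<in> S \<Longrightarrow> [a, a] \<simeq> []"
  using cox_eq.rel[where s=a and t=a and k=1 and S=S and m=M] diag[of a] by (simp add: one_enat_def)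

lemma ceq_wrev: "set w \<subseteq> S \<Longrightarrow> w @ rev w \<simeq> []"
proof (induction w)
  case (Cons a w)
  then have "[a] @ (w @ rev w) @ [a] \<simeq> [a] @ [] @ [a]" by (intro ceq_ctx) auto
  moreover have "[a,a] \<simeq> []" using Cons by (intro ceq_ss) auto
  ultimately show ?case by (auto intro: ceq_trans)
qed simp

lemma ceq_cancel: "set u \<subseteq> S \<Longrightarrow> set w \<subseteq> S \<Longrightarrow> set v \<subseteq> S \<Longrightarrow> u @ w @ rev w @ v \<simeq> u @ v"
  using ceq_ctx[OF ceq_wrev[of w], of u v] by simp

lemma ceq_cancel': "set u \<subseteq> S \<Longrightarrow> set w \<subseteq> S \<Longrightarrow> set v \<subseteq> S \<Longrightarrow> u @ rev w @ w @ v \<simeq> u @ v"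
  using ceq_cancel[of u "rev w" v] by simp

lemma ceq_cancel1: "set u \<subseteq> S \<Longrightarrow> a \<in> S \<Longrightarrow> set v \<subseteq> S \<Longrightarrow> u @ a # a # v \<simeq> u @ v"
  using ceq_cancel[of u "[a]" v] by simp

lemma ceq_rev: "u \<simeq> v \<Longrightarrow> set u \<subseteq> S \<Longrightarrow> rev u \<simeq> rev v"
proof -
  assume a: "u \<simeq> v" "set u \<subseteq> S"
  have v: "set v \<subseteq> S" using ceq_S[OF a] .
  have "rev u \<simeq> rev u @ v @ rev v"
    using ceq_cancel[of "rev u" v "[]"] a v by (simp add: ceq_sym)
  also have "rev u @ v @ rev v \<simeq> rev u @ u @ rev v"
    using ceq_ctx[OF ceq_sym[OF a(1)], of "rev u" "rev v"] a v by simp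
  also have "rev u @ u @ rev v \<simeq> [] @ rev v"
    using ceq_cancel'[of "[]" u "rev v"] a v by simp
  finally show ?thesis by simp
qed

lemma ceq_lcancel: "w @ u \<simeq> w @ v \<Longrightarrow> set w \<subseteq> S \<Longrightarrow> set u \<subseteq> S \<Longrightarrow> u \<simeq> v"
proof -
  assume a: "w @ u \<simeq> w @ v" "set w \<subseteq> S" "set u \<subseteq> S"
  have v: "set v \<subseteq> S" using ceq_S[OF a(1)] a by auto
  have "u \<simeq> [] @ rev w @ w @ u" using ceq_cancel'[of "[]" w u] a by (simp add: ceq_sym)
  also have "[] @ rev w @ w @ u \<simeq> rev w @ (w @ v) @ []" using ceq_ctx[OF a(1), of "rev w" "[]"] a by simp
  also have "rev w @ (w @ v) @ [] \<simeq> [] @ v" using ceq_cancel'[of "[]" w v] a v by simp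
  finally show ?thesis by simp
qed

lemma ceq_rcancel: "u @ w \<simeq> v @ w \<Longrightarrow> set w \<subseteq> S \<Longrightarrow> set u \<subseteq> S \<Longrightarrow> u \<simeq> v"
proof -
  assume a: "u @ w \<simeq> v @ w" "set w \<subseteq> S" "set u \<subseteq> S"
  have v: "set v \<subseteq> S" using ceq_S[OF a(1)] a by auto
  have "u \<simeq> u @ w @ rev w @ []" using ceq_cancel[of u w "[]"] a by (simp add: ceq_sym)
  also have "u @ w @ rev w @ [] \<simeq> [] @ (v @ w) @ rev w" using ceq_ctx[OF a(1), of "[]" "rev w"] a by simp
  also have "[] @ (v @ w) @ rev w \<simeq> v @ []" using ceq_cancel[of v w "[]"] a v by simp
  finally show ?thesis by simp
qed


subsection \<open>Geometric representation\<close>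

definition bb :: "'v \<Rightarrow> 'v \<Rightarrow> real" where
  "bb u w = (case M u w of enat k \<Rightarrow> - cos (pi / real k) | \<infinity> \<Rightarrow> -1)"

definition BB :: "'v \<Rightarrow> ('v \<Rightarrow> real) \<Rightarrow> real" where
  "BB u f = (\<Sum>w\<in>S. bb u w * f w)"

definition dl :: "'v \<Rightarrow> 'v \<Rightarrow> real" where "dl u z = (if z = u then 1 else 0)"

definition rf :: "'v \<Rightarrow> ('v \<Rightarrow> real) \<Rightarrow> ('v \<Rightarrow> real)" where
  "rf u f = (\<lambda>z. f z - 2 * BB u f * dl u z)"

definition rw :: "'v list \<Rightarrow> ('v \<Rightarrow> real) \<Rightarrow> ('v \<Rightarrow> real)" where
  "rw w = foldr (\<lambda>a g. rf a \<circ> g) w id"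

lemma rw_simps[simp]: "rw [] = id" "rw (a # w) = rf a \<circ> rw w"
  by (simp_all add: rw_def)

lemma rw_append: "rw (u @ v) = rw u \<circ> rw v"
  by (induction u) auto

lemma bb_diag: "s \<in> S \<Longrightarrow> bb s s = 1"
  using diag[of s] by (simp add: bb_def one_enat_def)

lemma bb_sym: "s \<in> S \<Longrightarrow> t \<in> S \<Longrightarrow> bb s t = bb t s"
  using symm[of s t] by (simp add: bb_def)

lemma BB_lin: "w \<in> S \<Longrightarrow> BB u (\<lambda>z. f z + a * dl w z) = BB u f + a * bb u w"
proof -
  assume w: "w \<in> S"
  have "BB u (\<lambda>z. f z + a * dl w z) = (\<Sum>z\<in>S. bb u z * f z) + (\<Sum>z\<in>S. a * bb u z * dl w z)"
    by (simp add: BB_def sum.distrib algebra_simps)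
  also have "(\<Sum>z\<in>S. a * bb u z * dl w z) = a * bb u w"
    using w finS by (simp add: dl_def if_distrib sum.delta' cong: if_cong)
  finally show ?thesis by (simp add: BB_def)
qed

lemma rf_alt: "rf u f = (\<lambda>z. f z + (- 2 * BB u f) * dl u z)"
  by (simp add: rf_def)

lemma BB_rf: "u \<in> S \<Longrightarrow> BB x (rf u f) = BB x f - 2 * BB u f * bb x u"
proof -
  assume u: "u \<in> S"
  have "BB x (rf u f) = BB x f + (- 2 * BB u f) * bb x u"
    unfolding rf_alt by (rule BB_lin[OF u])
  then show ?thesis by simp
qed

lemma rf_rf: "u \<in> S \<Longrightarrow> rf u (rf u f) = f"
proof -
  assume u: "u \<in> S"
  have "BB u (rf u f) = - BB u f" using BB_rf[OF u] bb_diag[OF u] by simp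
  then show ?thesis by (simp add: rf_def fun_eq_iff)
qed

lemma rw_rep: "rw (concat (replicate j w)) = rw w ^^ j"
  by (induction j) (auto simp: rw_append)

definition Mf :: "real \<Rightarrow> real \<times> real \<Rightarrow> real \<times> real" where
  "Mf c p = (- fst p - 2 * c * snd p, 2 * c * fst p + (4 * c^2 - 1) * snd p)"

lemma Mf_power_id:
  assumes k: "k \<ge> 2"
  shows "Mf (cos (pi / real k)) ^^ k = id"
proof (cases "k = 2")
  case True
  then show ?thesis by (auto simp: fun_eq_iff Mf_def numeral_2_eq_2)
next
  case False
  with k have k3: "k \<ge> 3" by simp
  define c where "c = cos (pi / real k)"
  define th where "th = 2 * pi / real k"
  have e: "4 * c^2 - 2 = 2 * cos th"
  proof -
    have "cos th = 2 * c^2 - 1"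
      using cos_double_cos[of "pi / real k"] by (simp add: c_def th_def mult.commute)
    then show ?thesis by simp
  qed
  have th0: "0 < th" using k by (simp add: th_def)
  have th1: "th < pi" using k3 by (simp add: th_def field_simps)
  have sth: "sin th > 0" using th0 th1 by (simp add: sin_gt_zero)
  define U where "U j = sin (real j * th) / sin th" for j :: nat
  have Urec: "U (Suc (Suc j)) = 2 * cos th * U (Suc j) - U j" for j
  proof -
    have "sin (real (Suc (Suc j)) * th) = sin (real (Suc j) * th + th)" by (simp add: algebra_simps)
    moreover have "sin (real j * th) = sin (real (Suc j) * th - th)" by (simp add: algebra_simps)
    ultimately have "sin (real (Suc (Suc j)) * th) = 2 * cos th * sin (real (Suc j) * th) - sin (real j * th)"
      by (simp add: sin_add sin_diff)
    then show ?thesis unfolding U_def by (simp add: diff_divide_distrib[symmetric])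
  qed
  have MM: "Mf c (Mf c p) = (2 * cos th * fst (Mf c p) - fst p, 2 * cos th * snd (Mf c p) - snd p)" for p
  proof -
    have ct: "cos th = 2 * c^2 - 1" using e by simp
    show ?thesis unfolding ct by (simp add: Mf_def algebra_simps power2_eq_square power3_eq_cube)
  qed
  have cl: "(Mf c ^^ Suc j) p = (U (Suc j) * fst (Mf c p) - U j * fst p, U (Suc j) * snd (Mf c p) - U j * snd p)" for j p
  proof (induction j)
    case 0
    then show ?case using sth by (simp add: U_def)
  next
    case (Suc j)
    have "(Mf c ^^ Suc (Suc j)) p = Mf c ((Mf c ^^ Suc j) p)" by simp
    also have "\<dots> = (U (Suc (Suc j)) * fst (Mf c p) - U (Suc j) * fst p, U (Suc (Suc j)) * snd (Mf c p) - U (Suc j) * snd p)"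
    proof -
      have lin: "Mf c (a * fst q - b * fst p, a * snd q - b * snd p)
          = (a * fst (Mf c q) - b * fst (Mf c p), a * snd (Mf c q) - b * snd (Mf c p))" for a b q
        by (simp add: Mf_def algebra_simps)
      show ?thesis unfolding Suc Urec lin[of _ "Mf c p"] MM by (simp add: algebra_simps)
    qed
    finally show ?case .
  qed
  have Uk: "U k = 0"
  proof -
    have "real k * th = 2 * pi" using k by (simp add: th_def)
    then show ?thesis by (simp add: U_def)
  qed
  have Uk1: "U (k - 1) = -1"
  proof -
    have "real (k - 1) * th = real k * th - th" using k by (simp add: of_nat_diff algebra_simps)
    also have "real k * th = 2 * pi" using k by (simp add: th_def)
    finally have "real (k - 1) * th = 2 * pi - th" .
    then show ?thesis using sth by (simp add: U_def sin_diff)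
  qed
  have kk: "Suc (k - 1) = k" using k by simp
  have "(Mf c ^^ k) p = p" for p using cl[of "k - 1" p] Uk Uk1 unfolding kk by (cases p) simp
  then show ?thesis by (auto simp: c_def fun_eq_iff)
qed


lemma rw_rel:
  assumes u: "u \<in> S" and v: "v \<in> S" and m: "M u v = enat k"
  shows "rw (concat (replicate k [u, v])) = id"
proof (cases "u = v")
  case True
  then have "k = 1" using diag[OF u] m by (simp add: one_enat_def)
  then show ?thesis using True rf_rf[OF u] by (auto simp: fun_eq_iff)
next
  case False
  have k: "k \<ge> 2" using offd[OF u v False] m by (simp add: numeral_eq_enat)
  define c where "c = cos (pi / real k)"
  have buv: "bb u v = - c" "bb v u = - c" using m bb_sym[OF u v] by (simp_all add: bb_def c_def)
  have c1: "c < 1"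
  proof -
    have "0 < pi / real k" "pi / real k \<le> pi" using k by (simp_all add: field_simps)
    then have "cos (pi / real k) < cos 0" by (intro cos_monotone_0_pi) auto
    then show ?thesis unfolding c_def by simp
  qed
  define T where "T = rw [u, v]"
  have T: "T f = rf u (rf v f)" for f by (simp add: T_def)
  have form: "\<exists>\<alpha> \<beta>. (T ^^ j) f = (\<lambda>z. f z + \<alpha> * dl u z + \<beta> * dl v z)" for j f
  proof (induction j)
    case 0 show ?case by (rule exI[of _ 0], rule exI[of _ 0]) simp
  next
    case (Suc j)
    then obtain \<alpha> \<beta> where e: "(T ^^ j) f = (\<lambda>z. f z + \<alpha> * dl u z + \<beta> * dl v z)" by blast
    define g where "g = (T ^^ j) f"
    have "(T ^^ Suc j) f = rf u (rf v g)" by (simp add: T g_def)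
    also have "\<dots> = (\<lambda>z. f z + (\<alpha> - 2 * BB u (rf v g)) * dl u z + (\<beta> - 2 * BB v g) * dl v z)"
      by (simp add: rf_def e g_def algebra_simps fun_eq_iff)
    finally show ?case by blast
  qed
  have XY: "(BB u ((T ^^ j) f), BB v ((T ^^ j) f)) = (Mf c ^^ j) (BB u f, BB v f)" for j f
  proof (induction j)
    case (Suc j)
    define g where "g = (T ^^ j) f"
    have "(T ^^ Suc j) f = rf u (rf v g)" by (simp add: T g_def)
    then have "(BB u ((T ^^ Suc j) f), BB v ((T ^^ Suc j) f)) = Mf c (BB u g, BB v g)"
      using u v by (simp add: BB_rf buv bb_diag Mf_def algebra_simps power2_eq_square)
    then show ?case using Suc by (simp add: g_def)
  qed simp
  have "(T ^^ k) f = f" for f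
  proof -
    obtain \<alpha> \<beta> where e: "(T ^^ k) f = (\<lambda>z. f z + \<alpha> * dl u z + \<beta> * dl v z)" using form by blast
    have "(BB u ((T ^^ k) f), BB v ((T ^^ k) f)) = (BB u f, BB v f)"
      using XY[of k f] Mf_power_id[OF k] by (simp add: c_def)
    moreover have "BB u ((T ^^ k) f) = BB u f + \<alpha> - c * \<beta>" "BB v ((T ^^ k) f) = BB v f - c * \<alpha> + \<beta>"
    proof -
      have "BB x (\<lambda>z. f z + \<alpha> * dl u z + \<beta> * dl v z) = BB x f + \<alpha> * bb x u + \<beta> * bb x v" for x
        using BB_lin[OF v, of x "\<lambda>z. f z + \<alpha> * dl u z" \<beta>] BB_lin[OF u, of x f \<alpha>] by simp
      then show "BB u ((T ^^ k) f) = BB u f + \<alpha> - c * \<beta>" "BB v ((T ^^ k) f) = BB v f - c * \<alpha> + \<beta>"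
        unfolding e using u v by (simp_all add: buv bb_diag)
    qed
    ultimately have h: "\<alpha> = c * \<beta>" "\<beta> = c * \<alpha>" by (simp_all only: prod.inject) linarith+
    then have hb: "\<beta> = c * (c * \<beta>)" by metis
    have "\<beta> * (1 - c * c) = \<beta> - c * (c * \<beta>)" by (simp add: algebra_simps)
    with hb have "\<beta> * (1 - c * c) = 0" by linarith
    moreover have "c * c < 1"
    proof -
      have "0 \<le> pi / real k" by simp
      moreover have "pi / real k \<le> pi / 2" using k by (simp add: field_simps)
      ultimately have "0 \<le> c" unfolding c_def by (intro cos_ge_zero) linarith+
      then have "c * c \<le> c" using c1 by (simp add: mult_left_le)
      then show ?thesis using c1 by linarith
    qed
    ultimately have "\<beta> = 0" by simp
    then have "\<alpha> = 0" using h(1) by simp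
    then show ?thesis using \<open>\<beta> = 0\<close> e by simp
  qed
  then show ?thesis by (simp add: rw_rep T_def fun_eq_iff)
qed

lemma rw_ceq: "u \<simeq> v \<Longrightarrow> rw u = rw v"
proof (induction rule: cox_eq.induct)
  case (rel s t k)
  then show ?case using rw_rel by simp
qed (auto simp: rw_append)

lemma rw_notin: "set w \<subseteq> -{s} \<Longrightarrow> rw w f s = f s"
  by (induction w arbitrary: f) (auto simp: rf_def dl_def)

lemma BB_dl: "s \<in> S \<Longrightarrow> BB u (dl s) = bb u s"
  using BB_lin[of s u "\<lambda>_. 0" 1] by (simp add: BB_def)

lemma gen_notin: "s \<in> S \<Longrightarrow> s \<notin> I \<Longrightarrow> set v \<subseteq> I \<Longrightarrow> \<not> [s] \<simeq> v"
proof
  assume a: "s \<in> S" "s \<notin> I" "set v \<subseteq> I" "[s] \<simeq> v"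
  have "rw [s] (dl s) s = rw v (dl s) s" using rw_ceq[OF a(4)] by simp
  moreover have "rw v (dl s) s = 1" using a by (subst rw_notin) (auto simp: dl_def)
  moreover have "rw [s] (dl s) s = -1" using a by (simp add: rf_def BB_dl bb_diag dl_def)
  ultimately show False by simp
qed

lemma noncomm: "s \<in> S \<Longrightarrow> t \<in> S \<Longrightarrow> s \<noteq> t \<Longrightarrow> M s t \<noteq> 2 \<Longrightarrow> \<not> [s, t] \<simeq> [t, s]"
proof
  assume a: "s \<in> S" "t \<in> S" "s \<noteq> t" "M s t \<noteq> 2" "[s, t] \<simeq> [t, s]"
  have "rw [s, t] (dl s) t = rw [t, s] (dl s) t" using rw_ceq[OF a(5)] by simp
  moreover have "rw [s, t] (dl s) t = - 2 * bb t s" using a by (simp add: rf_def BB_dl dl_def)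
  moreover have "rw [t, s] (dl s) t = 2 * bb t s"
  proof -
    have "rf s (dl s) = (\<lambda>z. (-1) * dl s z)" using a by (auto simp: rf_def BB_dl bb_diag fun_eq_iff dl_def)
    moreover have "BB t (\<lambda>z. (-1) * dl s z) = - bb t s" using BB_lin[of s t "\<lambda>_. 0" "-1"] a by (simp add: BB_def)
    ultimately show ?thesis using a by (simp add: rf_def dl_def)
  qed
  ultimately have "bb t s = 0" by simp
  moreover have "bb t s \<noteq> 0"
  proof (cases "M t s")
    case (enat k)
    have "k \<ge> 2" using offd[OF a(2) a(1)] a(3) enat by (auto simp: numeral_eq_enat)
    moreover have "k \<noteq> 2" using a(4) symm[OF a(1) a(2)] enat by (auto simp: numeral_eq_enat)
    ultimately have "k \<ge> 3" by simp
    then have "0 < cos (pi / real k)"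
      by (intro cos_gt_zero_pi) (auto simp: field_simps intro: less_le_trans[of _ 0] mult_nonneg_nonneg)
    then show ?thesis using enat by (simp add: bb_def)
  qed (simp add: bb_def)
  ultimately show False by simp
qed


subsection \<open>Reflection sequences\<close>

fun rs :: "'v list \<Rightarrow> 'v list list" where
  "rs [] = []"
| "rs (a # w) = [a] # map (\<lambda>t. [a] @ t @ [a]) (rs w)"

definition cnt :: "'v list \<Rightarrow> 'v list \<Rightarrow> nat" where
  "cnt w r = length (filter (\<lambda>t. t \<simeq> r) (rs w))"

lemma rs_length[simp]: "length (rs w) = length w"
  by (induction w) auto

lemma rs_nth: "p < length w \<Longrightarrow> rs w ! p = take p w @ [w ! p] @ rev (take p w)"
proof (induction w arbitrary: p)
  case (Cons a w)
  then show ?case by (cases p) auto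
qed simp

lemma rs_set: "t \<in> set (rs w) \<Longrightarrow> set t \<subseteq> set w"
  by (induction w arbitrary: t) fastforce+

lemma rs_append: "rs (u @ v) = rs u @ map (\<lambda>t. u @ t @ rev u) (rs v)"
  by (induction u) auto

lemma conj_iff: "set x \<subseteq> S \<Longrightarrow> set t \<subseteq> S \<Longrightarrow> set r \<subseteq> S \<Longrightarrow>
    (x @ t @ rev x \<simeq> r) \<longleftrightarrow> (t \<simeq> rev x @ r @ x)"
proof
  assume a: "set x \<subseteq> S" "set t \<subseteq> S" "set r \<subseteq> S"
  {
    assume h: "x @ t @ rev x \<simeq> r"
    have "t \<simeq> [] @ rev x @ x @ (t @ rev x @ x)"
      using ceq_cancel'[of "[]" x "t @ rev x @ x"] ceq_cancel'[of t x "[]"] a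
      by (auto intro: ceq_sym ceq_trans)
    also have "[] @ rev x @ x @ (t @ rev x @ x) = rev x @ (x @ t @ rev x) @ x" by simp
    also have "\<dots> \<simeq> rev x @ r @ x" using ceq_ctx[OF h, of "rev x" x] a by simp
    finally show "t \<simeq> rev x @ r @ x" .
  }
  {
    assume h: "t \<simeq> rev x @ r @ x"
    have "x @ t @ rev x \<simeq> x @ (rev x @ r @ x) @ rev x" using ceq_ctx[OF h, of x "rev x"] a by simp
    also have "x @ (rev x @ r @ x) @ rev x = [] @ x @ rev x @ (r @ x @ rev x)" by simp
    also have "\<dots> \<simeq> r @ x @ rev x" using ceq_cancel[of "[]" x "r @ x @ rev x"] a by simp
    also have "r @ x @ rev x \<simeq> r" using ceq_cancel[of r x "[]"] a by simp
    finally show "x @ t @ rev x \<simeq> r" .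
  }
qed

lemma cnt_resp: "r \<simeq> r' \<Longrightarrow> cnt w r = cnt w r'"
  unfolding cnt_def by (metis (no_types, lifting) ceq_sym ceq_trans filter_cong)

lemma cnt_append:
  assumes "set u \<subseteq> S" "set v \<subseteq> S" "set r \<subseteq> S"
  shows "cnt (u @ v) r = cnt u r + cnt v (rev u @ r @ u)"
proof -
  have "filter (\<lambda>t. t \<simeq> r) (map (\<lambda>t. u @ t @ rev u) (rs v))
      = map (\<lambda>t. u @ t @ rev u) (filter (\<lambda>t. t \<simeq> rev u @ r @ u) (rs v))"
  proof -
    have "filter (\<lambda>t. t \<simeq> r) (map (\<lambda>t. u @ t @ rev u) (rs v))
        = map (\<lambda>t. u @ t @ rev u) (filter ((\<lambda>t. t \<simeq> r) \<circ> (\<lambda>t. u @ t @ rev u)) (rs v))"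
      by (simp add: filter_map)
    also have "filter ((\<lambda>t. t \<simeq> r) \<circ> (\<lambda>t. u @ t @ rev u)) (rs v) = filter (\<lambda>t. t \<simeq> rev u @ r @ u) (rs v)"
    proof (rule filter_cong)
      fix t assume "t \<in> set (rs v)"
      then have "set t \<subseteq> S" using rs_set assms by blast
      then show "((\<lambda>t. t \<simeq> r) \<circ> (\<lambda>t. u @ t @ rev u)) t = (t \<simeq> rev u @ r @ u)"
        using conj_iff assms by simp
    qed simp
    finally show ?thesis .
  qed
  then show ?thesis by (simp add: cnt_def rs_append)
qed

fun alt :: "'v \<Rightarrow> 'v \<Rightarrow> nat \<Rightarrow> 'v list" where
  "alt s t 0 = []"
| "alt s t (Suc n) = s # alt t s n"

lemma alt_rep: "concat (replicate k [s, t]) = alt s t (2 * k)"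
  by (induction k) auto

lemma alt_add2: "alt s t (2 * a + b) = alt s t (2 * a) @ alt s t b"
  by (induction a) auto

lemma alt_snoc: "alt s t (Suc n) = alt s t n @ [if even n then s else t]"
  by (induction n arbitrary: s t) auto

lemma rs_alt: "rs (alt s t n) = map (\<lambda>p. alt s t (2 * p + 1)) [0..<n]"
proof (induction n arbitrary: s t)
  case (Suc n)
  have e: "[s] @ alt t s (2 * p + 1) @ [s] = alt s t (2 * Suc p + 1)" for p
  proof -
    have "alt t s (Suc (2 * p + 1)) = alt t s (2 * p + 1) @ [s]" by (subst alt_snoc) simp
    then show ?thesis by simp
  qed
  have "map (\<lambda>p. alt s t (2 * p + 1)) [0..<Suc n] = alt s t 1 # map (\<lambda>p. alt s t (2 * Suc p + 1)) [0..<n]"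
    by (simp add: map_upt_Suc del: upt_Suc)
  then show ?case using Suc e by simp
qed simp

lemma cnt_rel: "s \<in> S \<Longrightarrow> t \<in> S \<Longrightarrow> M s t = enat k \<Longrightarrow> even (cnt (concat (replicate k [s, t])) r)"
proof -
  assume a: "s \<in> S" "t \<in> S" "M s t = enat k"
  define g where "g p = alt s t (2 * p + 1)" for p
  define P where "P p = (g p \<simeq> r)" for p
  have per: "P (p + k) = P p" for p
  proof -
    have "g (p + k) = alt s t (2 * k + (2 * p + 1))" by (simp add: g_def algebra_simps)
    then have "g (p + k) = alt s t (2 * k) @ g p" by (simp only: alt_add2 g_def)
    moreover have "alt s t (2 * k) \<simeq> []" using cox_eq.rel[where S=S and m=M, OF a] by (simp add: alt_rep)
    moreover have "set (alt s t m) \<subseteq> S" for m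
    proof -
      have "set (alt s' t' m) \<subseteq> {s', t'}" for s' t' by (induction m arbitrary: s' t') auto
      then show ?thesis using a by blast
    qed
    ultimately have "g (p + k) \<simeq> g p" using ceq_ctx[of "alt s t (2 * k)" "[]" "[]" "g p"]
      unfolding g_def by (simp del: alt.simps)
    then show ?thesis unfolding P_def by (meson ceq_sym ceq_trans)
  qed
  have "cnt (concat (replicate k [s, t])) r = length (filter P [0..<k + k])"
    unfolding cnt_def alt_rep rs_alt filter_map length_map mult_2[symmetric] P_def g_def o_def by simp
  also have "[0..<k + k] = [0..<k] @ map (\<lambda>i. i + k) [0..<k]"
    by (simp add: map_add_upt upt_add_eq_append[of 0 k])
  also have "length (filter P ([0..<k] @ map (\<lambda>i. i + k) [0..<k])) = 2 * length (filter P [0..<k])"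
    by (simp add: filter_map o_def per)
  finally show ?thesis by simp
qed

lemma cnt_inv: "u \<simeq> v \<Longrightarrow> set u \<subseteq> S \<Longrightarrow> set r \<subseteq> S \<Longrightarrow> even (cnt u r) = even (cnt v r)"
proof (induction arbitrary: r rule: cox_eq.induct)
  case (refl w)
  then show ?case by simp
next
  case (sym u v)
  have "set u \<subseteq> S" using ceq_S[OF ceq_sym[OF sym.hyps] sym.prems(1)] .
  then show ?case using sym.IH[OF _ sym.prems(2)] by simp
next
  case (trans u v w)
  have "set v \<subseteq> S" using ceq_S[OF trans.hyps(1) trans.prems(1)] .
  then show ?case using trans.IH(1)[OF trans.prems] trans.IH(2)[OF _ trans.prems(2)] by simp
next
  case (cong u v x y)
  have su: "set u \<subseteq> S" and sy: "set y \<subseteq> S" and sx: "set x \<subseteq> S" using cong.prems cong.hyps by auto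
  have sv: "set v \<subseteq> S" using ceq_S[OF cong.hyps(1) su] .
  define r1 where "r1 = rev x @ r @ x"
  have r1: "set r1 \<subseteq> S" using sx cong.prems by (auto simp: r1_def)
  have e1: "cnt (x @ u @ y) r = cnt x r + (cnt u r1 + cnt y (rev u @ r1 @ u))"
    using cnt_append[of x "u @ y" r] cnt_append[of u y r1] su sy sx cong.prems(2) r1 by (simp add: r1_def)
  have e2: "cnt (x @ v @ y) r = cnt x r + (cnt v r1 + cnt y (rev v @ r1 @ v))"
    using cnt_append[of x "v @ y" r] cnt_append[of v y r1] sv sy sx cong.prems(2) r1 by (simp add: r1_def)
  have "rev u @ r1 @ u \<simeq> rev v @ r1 @ v"
    by (rule ceq_app[OF ceq_rev[OF cong.hyps(1) su] ceq_app[OF ceq_refl[of r1] cong.hyps(1)]]) (use su sv r1 in auto)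
  then have e3: "cnt y (rev u @ r1 @ u) = cnt y (rev v @ r1 @ v)" by (rule cnt_resp)
  have e4: "even (cnt u r1) = even (cnt v r1)" using cong.IH[OF su r1] .
  show ?case unfolding e1 e2 e3 using e4 by simp
next
  case (rel s t k)
  have "cnt [] r = 0" by (simp add: cnt_def)
  then show ?case using cnt_rel[OF rel(1-3), of r] by simp
qed


subsection \<open>Deletion and reduced words\<close>

definition del :: "nat \<Rightarrow> 'v list \<Rightarrow> 'v list" where
  "del q w = take q w @ drop (Suc q) w"

definition reduced :: "'v list \<Rightarrow> bool" where
  "reduced w \<longleftrightarrow> set w \<subseteq> S \<and> (\<forall>v. set v \<subseteq> S \<longrightarrow> v \<simeq> w \<longrightarrow> length w \<le> length v)"

definition inW :: "'v set \<Rightarrow> 'v list \<Rightarrow> bool" where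
  "inW J w \<longleftrightarrow> (\<exists>v. set v \<subseteq> J \<and> w \<simeq> v)"

lemma del_set: "set (del q w) \<subseteq> set w"
  unfolding del_def using set_take_subset set_drop_subset by fastforce

lemma del_length: "q < length w \<Longrightarrow> length (del q w) = length w - 1"
  by (simp add: del_def)

lemma rs_palin: "p < length w \<Longrightarrow> rev (rs w ! p) = rs w ! p"
  by (simp add: rs_nth)

lemma rs_S: "set w \<subseteq> S \<Longrightarrow> p < length w \<Longrightarrow> set (rs w ! p) \<subseteq> S"
  using rs_set[of "rs w ! p" w] by (metis nth_mem rs_length subset_trans)

lemma L1:
  assumes w: "set w \<subseteq> S" and q: "q < length w"
  shows "rs w ! q @ w \<simeq> del q w"
proof -
  define A where "A = take q w"
  define a where "a = w ! q"
  define B where "B = drop (Suc q) w"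
  have w': "w = A @ a # B" unfolding A_def a_def B_def using id_take_nth_drop[OF q] .
  have S: "set A \<subseteq> S" "a \<in> S" "set B \<subseteq> S" using w unfolding w' by auto
  have e: "rs w ! q = A @ [a] @ rev A" using rs_nth[OF q] by (simp add: A_def a_def)
  have "rs w ! q @ w = (A @ [a]) @ rev A @ A @ ([a] @ B)"
    unfolding e by (subst w') simp
  also have "\<dots> \<simeq> (A @ [a]) @ ([a] @ B)" using ceq_cancel'[of "A @ [a]" A "[a] @ B"] S by simp
  also have "(A @ [a]) @ ([a] @ B) = A @ a # a # B" by simp
  also have "\<dots> \<simeq> A @ B" using ceq_cancel1[of A a B] S by simp
  also have "A @ B = del q w" by (simp add: del_def A_def B_def)
  finally show ?thesis .
qed

lemma deletion:
  assumes w: "set w \<subseteq> S" and pq: "p < q" "q < length w" and e: "rs w ! p \<simeq> rs w ! q"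
  shows "w \<simeq> del p (del q w)"
proof -
  define tp where "tp = rs w ! p"
  define tq where "tq = rs w ! q"
  have Sp: "set tp \<subseteq> S" using rs_S[OF w] pq by (simp add: tp_def)
  have Sq: "set tq \<subseteq> S" using rs_S[OF w] pq by (simp add: tq_def)
  have Sd: "set (del q w) \<subseteq> S" using del_set w by blast
  have "w \<simeq> tp @ rev tp @ w" using ceq_cancel[of "[]" tp w] Sp w by (simp add: ceq_sym)
  also have "rev tp = tp" using rs_palin pq by (simp add: tp_def)
  also have "tp @ tp @ w \<simeq> tp @ tq @ w" using ceq_ctx[of tp tq tp w] e Sp w by (simp add: tp_def tq_def)
  also have "tp @ tq @ w \<simeq> tp @ del q w @ []" using ceq_ctx[OF L1[OF w pq(2)], of tp "[]"] Sp by (simp add: tq_def)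
  also have "tp = rs (del q w) ! p"
  proof -
    have "p < length (del q w)" using pq by (simp add: del_length)
    moreover have "take p (del q w) = take p w" "del q w ! p = w ! p" using pq
      by (simp_all add: del_def nth_append min_def)
    ultimately show ?thesis using pq by (simp add: rs_nth tp_def)
  qed
  also have "rs (del q w) ! p @ del q w @ [] \<simeq> del p (del q w)"
    using L1[OF Sd, of p] pq by (simp add: del_length)
  finally show ?thesis .
qed

lemma nonreduced_pair:
  assumes w: "set w \<subseteq> S" and nr: "\<not> reduced w"
  shows "\<exists>p q. p < q \<and> q < length w \<and> rs w ! p \<simeq> rs w ! q"
proof (rule ccontr)
  assume "\<not> ?thesis"
  then have dist: "\<And>p q. p < length w \<Longrightarrow> q < length w \<Longrightarrow> rs w ! p \<simeq> rs w ! q \<Longrightarrow> p = q"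
    by (metis ceq_sym linorder_neqE_nat)
  have "reduced w" unfolding reduced_def
  proof (intro conjI allI impI)
    fix v assume v: "set v \<subseteq> S" "v \<simeq> w"
    have ex: "\<exists>i. i < length v \<and> rs v ! i \<simeq> rs w ! p" if p: "p < length w" for p
    proof -
      have "{i. i < length w \<and> rs w ! i \<simeq> rs w ! p} = {p}" using dist p by auto
      then have "cnt w (rs w ! p) = 1" by (simp add: cnt_def length_filter_conv_card)
      then have "odd (cnt v (rs w ! p))"
        using cnt_inv[OF ceq_sym[OF v(2)] w rs_S[OF w p]] by simp
      then have "cnt v (rs w ! p) \<noteq> 0" by (metis even_zero)
      then have "{i. i < length v \<and> rs v ! i \<simeq> rs w ! p} \<noteq> {}"
        by (simp add: cnt_def length_filter_conv_card del: Collect_empty_eq)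
      then show ?thesis by auto
    qed
    define f where "f p = (SOME i. i < length v \<and> rs v ! i \<simeq> rs w ! p)" for p
    have f: "f p < length v \<and> rs v ! f p \<simeq> rs w ! p" if "p < length w" for p
      using someI_ex[OF ex[OF that]] by (simp add: f_def)
    have "inj_on f {..<length w}"
    proof (rule inj_onI)
      fix p p' assume "p \<in> {..<length w}" "p' \<in> {..<length w}" "f p = f p'"
      then show "p = p'" using f dist by (metis ceq_sym ceq_trans lessThan_iff)
    qed
    moreover have "f ` {..<length w} \<subseteq> {..<length v}" using f by auto
    ultimately have "card {..<length w} \<le> card {..<length v}" by (intro card_inj_on_le) auto
    then show "length w \<le> length v" by simp
  qed (rule w)
  with nr show False by simp
qed

lemma reduced_odd:
  assumes r: "reduced w" and q: "q < length w"
  shows "odd (cnt w (rs w ! q))"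
proof -
  have w: "set w \<subseteq> S" using r by (simp add: reduced_def)
  have dist: "p = q" if p: "p < length w" and e: "rs w ! p \<simeq> rs w ! q" for p
  proof (rule ccontr)
    assume pq: "p \<noteq> q"
    define a where "a = min p q"
    define b where "b = max p q"
    have ab: "a < b" "b < length w" "rs w ! a \<simeq> rs w ! b"
      using pq p q e by (auto simp: a_def b_def min_def max_def intro: ceq_sym)
    have "w \<simeq> del a (del b w)" by (rule deletion[OF w ab])
    moreover have "set (del a (del b w)) \<subseteq> S" using del_set w by (meson subset_trans)
    moreover have "length (del a (del b w)) < length w" using ab by (simp add: del_length)
    ultimately show False using r unfolding reduced_def by (meson ceq_sym not_le)
  qed
  have "{i. i < length w \<and> rs w ! i \<simeq> rs w ! q} = {q}" using dist q by auto
  then show ?thesis by (simp add: cnt_def length_filter_conv_card)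
qed

lemma shorten:
  assumes I: "I \<subseteq> S" and x: "set x \<subseteq> I" and nr: "\<not> reduced x"
  shows "\<exists>x'. set x' \<subseteq> I \<and> length x' < length x \<and> x \<simeq> x'"
proof -
  have xS: "set x \<subseteq> S" using x I by blast
  obtain p q where pq: "p < q" "q < length x" "rs x ! p \<simeq> rs x ! q" using nonreduced_pair[OF xS nr] by blast
  show ?thesis
    using deletion[OF xS pq] del_set[of p "del q x"] del_set[of q x] x pq
    by (intro exI[of _ "del p (del q x)"]) (auto simp: del_length)
qed

lemma cnt_odd_ex: "odd (cnt w r) \<Longrightarrow> \<exists>e\<in>set (rs w). e \<simeq> r"
proof -
  assume "odd (cnt w r)"
  then have "filter (\<lambda>t. t \<simeq> r) (rs w) \<noteq> []" unfolding cnt_def by (metis list.size(3) even_zero)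
  then show ?thesis by (simp add: filter_empty_conv)
qed


lemma rs_single: "cnt [s] r = (if [s] \<simeq> r then 1 else 0)"
  by (simp add: cnt_def)

lemma lemE:
  assumes I: "I \<subseteq> S" and s: "s \<in> S" "s \<notin> I" and t: "t \<in> I"
    and e: "set e \<subseteq> I" "[s, t, s] \<simeq> e"
  shows "[s, t] \<simeq> [t, s]"
proof (rule ccontr)
  assume nc: "\<not> [s, t] \<simeq> [t, s]"
  have tS: "t \<in> S" using t I by blast
  have n1: "\<not> [s, t, s] \<simeq> [s]"
  proof
    assume h: "[s, t, s] \<simeq> [s]"
    have "[t, s] \<simeq> []" using ceq_lcancel[of "[s]" "[t, s]" "[]"] h s tS by simp
    then have a: "[t, s, s] \<simeq> [s]" using ceq_ctx[of "[t, s]" "[]" "[]" "[s]"] s by simp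
    have b: "[t, s, s] \<simeq> [t]" using ceq_cancel1[of "[t]" s "[]"] s tS by simp
    have "[s] \<simeq> [t]" by (rule ceq_trans[OF ceq_sym[OF a] b])
    then show False using gen_notin[OF s, of "[t]"] t by simp
  qed
  have n2: "\<not> [s, t, s, t, s] \<simeq> [s]"
  proof
    assume h: "[s, t, s, t, s] \<simeq> [s]"
    have "[s, t, s, t] \<simeq> []" using ceq_rcancel[of "[s, t, s, t]" "[s]" "[]"] h s tS by simp
    then have a: "[s, t, s, t, t, s] \<simeq> [t, s]" using ceq_ctx[of "[s, t, s, t]" "[]" "[]" "[t, s]"] s tS by simp
    have b: "[s, t, s, t, t, s] \<simeq> [s, t, s, s]" using ceq_cancel1[of "[s,t,s]" t "[s]"] s tS by simp
    have c: "[s, t, s, s] \<simeq> [s, t]" using ceq_cancel1[of "[s,t]" s "[]"] s tS by simp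
    have "[s, t] \<simeq> [t, s]" by (rule ceq_trans[OF ceq_sym[OF c] ceq_trans[OF ceq_sym[OF b] a]])
    then show False using nc by simp
  qed
  have "cnt [s, t, s] [s] = 1"
    using n1 n2 by (simp add: cnt_def)
  then have "odd (cnt e [s])" using cnt_inv[OF e(2) _, of "[s]"] s tS by simp
  then obtain r where r: "r \<in> set (rs e)" "r \<simeq> [s]" using cnt_odd_ex by blast
  have rI: "set r \<subseteq> I" using rs_set[OF r(1)] e by blast
  show False using gen_notin[OF s rI] ceq_sym[OF r(2)] by simp
qed

lemma lemB:
  assumes I: "I \<subseteq> S" and s: "s \<in> S" "s \<notin> I"
  shows "set x \<subseteq> I \<Longrightarrow> inW I ([s] @ x @ [s]) \<Longrightarrow> inW {t\<in>I. [s, t] \<simeq> [t, s]} x"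
proof (induction x rule: length_induct)
  case (1 x)
  note IH = 1(1)[rule_format]
  have xS: "set x \<subseteq> S" using 1(2) I by blast
  define C where "C = {t\<in>I. [s, t] \<simeq> [t, s]}"
  show ?case
  proof (cases "reduced x")
    case False
    then obtain x' where x': "set x' \<subseteq> I" "length x' < length x" "x \<simeq> x'" using shorten[OF I 1(2)] by blast
    have "[s] @ x' @ [s] \<simeq> [s] @ x @ [s]" using ceq_ctx[OF ceq_sym[OF x'(3)], of "[s]" "[s]"] s by simp
    then have "inW I ([s] @ x' @ [s])" using 1(3) unfolding inW_def by (blast intro: ceq_trans)
    then have "inW C x'" using IH[OF x'(2) x'(1)] by (simp add: C_def)
    then show ?thesis using x'(3) unfolding inW_def C_def by (blast intro: ceq_trans)
  next
    case red: True
    show ?thesis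
    proof (cases x rule: rev_cases)
      case Nil
      then show ?thesis unfolding inW_def by (intro exI[of _ "[]"]) simp
    next
      case (snoc x1 t)
      have tI: "t \<in> I" and x1I: "set x1 \<subseteq> I" using 1(2) snoc by auto
      have tS: "t \<in> S" and x1S: "set x1 \<subseteq> S" using tI x1I I by auto
      obtain y where y: "set y \<subseteq> I" "[s] @ x @ [s] \<simeq> y" using 1(3) by (auto simp: inW_def)
      have yS: "set y \<subseteq> S" using y I by blast
      define q where "q = length x1"
      define tq where "tq = x1 @ [t] @ rev x1"
      have q: "q < length x" by (simp add: q_def snoc)
      have tqe: "rs x ! q = tq" using rs_nth[OF q] by (simp add: q_def tq_def snoc)
      have tqI: "set tq \<subseteq> I" using tI x1I by (auto simp: tq_def)
      have tqS: "set tq \<subseteq> S" using tqI I by blast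
      define R where "R = [s] @ tq @ [s]"
      have RS: "set R \<subseteq> S" using tqS s by (simp add: R_def)
      have odd1: "odd (cnt x tq)" using reduced_odd[OF red q] tqe by simp
      have nsq: "\<not> [s] \<simeq> R"
      proof
        assume "[s] \<simeq> R"
        then have "R \<simeq> [s]" by (rule ceq_sym)
        then have "[s] @ tq @ rev [s] \<simeq> [s]" unfolding R_def by simp
        then have "tq \<simeq> [s, s, s]" using conj_iff[of "[s]" tq "[s]"] s tqS by simp
        moreover have "[s, s, s] \<simeq> [s]" using ceq_cancel1[of "[]" s "[s]"] s by simp
        ultimately have "[s] \<simeq> tq" by (rule ceq_sym[OF ceq_trans])
        then show False using gen_notin[OF s tqI] by simp
      qed
      have "cnt ([s] @ x) R = cnt [s] R + cnt x ([s] @ R @ [s])"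
        using cnt_append[of "[s]" x R] s xS RS by simp
      moreover have "cnt x ([s] @ R @ [s]) = cnt x tq"
      proof (rule cnt_resp)
        have a: "[s] @ R @ [s] \<simeq> tq @ [s, s]" using ceq_cancel1[of "[]" s "tq @ [s, s]"] s tqS by (simp add: R_def)
        have b: "tq @ [s, s] \<simeq> tq" using ceq_cancel1[of tq s "[]"] s tqS by simp
        show "[s] @ R @ [s] \<simeq> tq" by (rule ceq_trans[OF a b])
      qed
      ultimately have odd2: "odd (cnt ([s] @ x) R)" using nsq odd1 by (simp add: rs_single)
      have h1: "[s] @ x \<simeq> y @ [s]"
      proof -
        have a: "s # x @ [s, s] \<simeq> s # x" using ceq_cancel1[of "[s] @ x" s "[]"] s xS by simp
        have b: "s # x @ [s, s] \<simeq> y @ [s]" using ceq_app[OF y(2) ceq_refl[of "[s]"]] s xS by simp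
        show ?thesis using ceq_trans[OF ceq_sym[OF a] b] by simp
      qed
      have odd3: "odd (cnt (y @ [s]) R)" using cnt_inv[OF h1 _ RS] odd2 s xS by simp
      have h2: "rev x @ [s] \<simeq> [s] @ rev y" using ceq_rev[OF h1] s xS by simp
      have RR: "y @ [s, t, s] @ rev y \<simeq> R"
      proof -
        have "x @ [t] @ rev x = (x1 @ [t]) @ t # t # rev x1" by (simp add: snoc)
        also have "\<dots> \<simeq> (x1 @ [t]) @ rev x1" using ceq_cancel1[of "x1 @ [t]" t "rev x1"] tS x1S by simp
        finally have "x @ [t] @ rev x \<simeq> tq" by (simp add: tq_def)
        then have A: "[s] @ (x @ [t] @ rev x) @ [s] \<simeq> R" unfolding R_def using s by (intro ceq_ctx) auto
        have B: "([s] @ x) @ ([t] @ (rev x @ [s])) \<simeq> (y @ [s]) @ ([t] @ ([s] @ rev y))"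
          by (rule ceq_app[OF h1 ceq_app[OF ceq_refl h2]]) (use s tS xS yS in auto)
        have B': "y @ [s, t, s] @ rev y \<simeq> [s] @ (x @ [t] @ rev x) @ [s]" using ceq_sym[OF B] by simp
        show ?thesis by (rule ceq_trans[OF B' A])
      qed
      obtain e where e: "e \<in> set (rs (y @ [s]))" "e \<simeq> R" using cnt_odd_ex[OF odd3] by blast
      have comm: "[s, t] \<simeq> [t, s]"
      proof (cases "e \<in> set (rs y)")
        case True
        have eI: "set e \<subseteq> I" using rs_set[OF True] y by blast
        have "y @ [s, t, s] @ rev y \<simeq> e" by (rule ceq_trans[OF RR ceq_sym[OF e(2)]])
        then have "[s, t, s] \<simeq> rev y @ e @ y" using conj_iff[of y "[s,t,s]" e] yS s tS eI I by auto
        moreover have "set (rev y @ e @ y) \<subseteq> I" using eI y(1) by simp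
        ultimately show ?thesis using lemE[OF I s tI] by blast
      next
        case False
        then have ee: "e = y @ [s] @ rev y" using e(1) by (simp add: rs_append)
        have "y @ [s] @ rev y \<simeq> y @ [s, t, s] @ rev y" using ceq_trans[OF e(2) ceq_sym[OF RR]] ee by simp
        then have F1: "[s] \<simeq> rev y @ (y @ [s, t, s] @ rev y) @ y" using conj_iff[of y "[s]"] yS s tS by simp
        have F2: "rev y @ (y @ [s, t, s] @ rev y) @ y \<simeq> [s, t, s]"
        proof -
          have a: "rev y @ (y @ [s, t, s] @ rev y) @ y \<simeq> [s, t, s] @ rev y @ y"
            using ceq_cancel'[of "[]" y "[s, t, s] @ rev y @ y"] yS s tS by simp
          have b: "[s, t, s] @ rev y @ y \<simeq> [s, t, s]"
            using ceq_cancel'[of "[s, t, s]" y "[]"] yS s tS by simp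
          show ?thesis by (rule ceq_trans[OF a b])
        qed
        have h: "[s] @ [] \<simeq> [s] @ [t, s]" using ceq_trans[OF F1 F2] by simp
        have "[] \<simeq> [t, s]" using ceq_lcancel[OF h] s by simp
        then have a: "[s] \<simeq> [t, s, s]" using ceq_ctx[of "[]" "[t,s]" "[]" "[s]"] s by simp
        have b: "[t, s, s] \<simeq> [t]" using ceq_cancel1[of "[t]" s "[]"] s tS by simp
        have "[s] \<simeq> [t]" by (rule ceq_trans[OF a b])
        then show ?thesis using gen_notin[OF s, of "[t]"] tI by simp
      qed
      have "inW I ([s] @ x1 @ [s])"
      proof -
        have "[s] @ x1 @ [s] \<simeq> [s] @ x1 @ t # t # [s]"
          using ceq_sym[OF ceq_cancel1[of "[s] @ x1" t "[s]"]] s tS x1S by simp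
        also have "[s] @ x1 @ t # t # [s] \<simeq> ([s] @ x1 @ [t]) @ s # s # [t, s]"
          using ceq_sym[OF ceq_cancel1[of "[s] @ x1 @ [t]" s "[t, s]"]] s tS x1S by simp
        also have "([s] @ x1 @ [t]) @ s # s # [t, s] = ([s] @ x @ [s]) @ [s, t, s]" by (simp add: snoc)
        also have "\<dots> \<simeq> y @ [s, t, s]" using ceq_app[OF y(2) ceq_refl] s tS xS by simp
        also have "y @ [s, t, s] \<simeq> y @ [t]"
        proof -
          have a: "[s, t, s] \<simeq> [t, s, s]" using ceq_app[OF comm ceq_refl] s tS by simp
          have b: "[t, s, s] \<simeq> [t]" using ceq_cancel1[of "[t]" s "[]"] s tS by simp
          have "[s, t, s] \<simeq> [t]" by (rule ceq_trans[OF a b])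
          then show ?thesis using ceq_ctx[of "[s,t,s]" "[t]" y "[]"] yS by simp
        qed
        finally show ?thesis using y tI unfolding inW_def by (intro exI[of _ "y @ [t]"]) auto
      qed
      then have "inW C x1" using IH[of x1] x1I snoc by (simp add: C_def)
      then obtain v1 where v1: "set v1 \<subseteq> C" "x1 \<simeq> v1" by (auto simp: inW_def)
      have "x \<simeq> v1 @ [t]" using ceq_app[OF v1(2) ceq_refl[of "[t]"]] x1S tS snoc by simp
      moreover have "t \<in> C" using tI comm by (simp add: C_def)
      moreover have "set (v1 @ [t]) \<subseteq> C" using v1(1) \<open>t \<in> C\<close> by simp
      ultimately show ?thesis unfolding inW_def C_def by blast
    qed
  qed
qed

end

lemma gamma_S_mono: "k \<le> k' \<Longrightarrow> gamma_S S0 m1 k \<subseteq> gamma_S S0 m1 k'"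
  by (auto simp: gamma_S_def)

lemma gamma_S_1: "gamma_S S0 m1 1 = Inl ` S0 \<union> {Inr 1}"
  by (auto simp: gamma_S_def)

locale gam =
  fixes S0 :: "'a set" and m1 :: "('a + nat) \<Rightarrow> ('a + nat) \<Rightarrow> enat" and n :: nat
  assumes finS0: "finite S0" and cm: "coxeter_matrix (gamma_S S0 m1 1) m1"

sublocale gam \<subseteq> cox "gamma_S S0 m1 (int n)" "gamma_M m1"
proof
  have c1: "\<And>s. s \<in> gamma_S S0 m1 1 \<Longrightarrow> m1 s s = 1"
    and c2: "\<And>s t. s \<in> gamma_S S0 m1 1 \<Longrightarrow> t \<in> gamma_S S0 m1 1 \<Longrightarrow> m1 s t = m1 t s"
    and c3: "\<And>s t. s \<in> gamma_S S0 m1 1 \<Longrightarrow> t \<in> gamma_S S0 m1 1 \<Longrightarrow> s \<noteq> t \<Longrightarrow> m1 s t \<ge> 2"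
    using cm unfolding coxeter_matrix_def by blast+
  have S1: "Inl a \<in> gamma_S S0 m1 1 \<longleftrightarrow> a \<in> S0" "Inr j \<in> gamma_S S0 m1 1 \<longleftrightarrow> j = 1" for a j
    by (auto simp: gamma_S_1)
  have Sn: "x \<in> gamma_S S0 m1 (int n) \<longleftrightarrow> (\<exists>a\<in>S0. x = Inl a) \<or> (\<exists>j. 1 \<le> j \<and> j \<le> n \<and> x = Inr j)" for x
    by (auto simp: gamma_S_def)
  show "finite (gamma_S S0 m1 (int n))" using finS0 by (simp add: gamma_S_def)
  show "\<And>s. s \<in> gamma_S S0 m1 (int n) \<Longrightarrow> gamma_M m1 s s = 1"
    using c1 S1 by (auto simp: Sn gamma_M_def)
  show "\<And>s t. s \<in> gamma_S S0 m1 (int n) \<Longrightarrow> t \<in> gamma_S S0 m1 (int n) \<Longrightarrow> gamma_M m1 s t = gamma_M m1 t s"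
    using c2 S1 by (auto simp: Sn gamma_M_def)
  show "\<And>s t. s \<in> gamma_S S0 m1 (int n) \<Longrightarrow> t \<in> gamma_S S0 m1 (int n) \<Longrightarrow> s \<noteq> t \<Longrightarrow> 2 \<le> gamma_M m1 s t"
  proof -
    fix s t assume st: "s \<in> gamma_S S0 m1 (int n)" "t \<in> gamma_S S0 m1 (int n)" "s \<noteq> t"
    have l1: "2 \<le> m1 (Inl a) (Inl b)" if "a \<in> S0" "b \<in> S0" "a \<noteq> b" for a b
      using c3[of "Inl a" "Inl b"] that S1 by auto
    have l2: "2 \<le> m1 (Inl a) (Inr 1)" "2 \<le> m1 (Inr 1) (Inl a)" if "a \<in> S0" for a
      using c3[of "Inl a" "Inr 1"] c3[of "Inr 1" "Inl a"] that S1 by auto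
    show "2 \<le> gamma_M m1 s t"
      using st l1 l2 by (auto simp: Sn gamma_M_def split: if_splits) (use l1 in blast)
  qed
qed

context gam
begin

abbreviation ceqg (infix "\<simeq>" 50) where "u \<simeq> v \<equiv> cox_eq (gamma_S S0 m1 (int n)) (gamma_M m1) u v"

abbreviation J :: "int \<Rightarrow> ('a + nat) set" where "J k \<equiv> gamma_S S0 m1 k"

lemma J_S: "k \<le> int n \<Longrightarrow> J k \<subseteq> J (int n)"
  by (rule gamma_S_mono)

lemma lemB':
  assumes k: "1 \<le> k" "k \<le> n" and x: "set x \<subseteq> J (int k - 1)"
    and h: "inW (J (int k - 1)) ([Inr k] @ x @ [Inr k])"
  shows "inW (J (int k - 2)) x"
proof -
  have I: "J (int k - 1) \<subseteq> J (int n)" using k by (intro J_S) simp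
  have s: "Inr k \<in> J (int n)" "Inr k \<notin> J (int k - 1)" using k by (auto simp: gamma_S_def)
  have "inW {t \<in> J (int k - 1). [Inr k, t] \<simeq> [t, Inr k]} x" using lemB[OF I s x h] .
  moreover have "{t \<in> J (int k - 1). [Inr k, t] \<simeq> [t, Inr k]} \<subseteq> J (int k - 2)"
  proof
    fix t assume t: "t \<in> {t \<in> J (int k - 1). [Inr k, t] \<simeq> [t, Inr k]}"
    show "t \<in> J (int k - 2)"
    proof (rule ccontr)
      assume nt: "t \<notin> J (int k - 2)"
      have tS: "t \<in> J (int n)" using t I by blast
      have ne: "Inr k \<noteq> t" using t s by auto
      have "gamma_M m1 (Inr k) t \<noteq> 2"
      proof (cases "k = 1")
        case True
        have e0: "J (int k - 1) = Inl ` S0" using True by (auto simp: gamma_S_def)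
        have e1: "J (int k - 2) = Inl ` {a \<in> S0. m1 (Inl a) (Inr 1) = 2}" using True by (simp add: gamma_S_def)
        obtain a where a: "t = Inl a" "a \<in> S0" using t e0 by blast
        have a2: "m1 (Inl a) (Inr 1) \<noteq> 2" using nt a e1 by blast
        have sy: "\<forall>s\<in>gamma_S S0 m1 1. \<forall>t\<in>gamma_S S0 m1 1. m1 s t = m1 t s"
          using cm unfolding coxeter_matrix_def by blast
        have mem: "Inr 1 \<in> gamma_S S0 m1 1" "Inl a \<in> gamma_S S0 m1 1" using a(2) by (auto simp: gamma_S_1)
        have "m1 (Inr 1) (Inl a) = m1 (Inl a) (Inr 1)" using bspec[OF bspec[OF sy mem(1)] mem(2)] .
        then show ?thesis using a a2 True by (simp add: gamma_M_def)
      next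
        case False
        have e0: "J (int k - 1) = Inl ` S0 \<union> Inr ` {1..k-1}" using False k
          by (simp add: gamma_S_def nat_diff_distrib)
        have e1: "J (int k - 2) = Inl ` S0 \<union> Inr ` {1..k-2}" using False k
          by (simp add: gamma_S_def nat_diff_distrib)
        have "t \<in> Inr ` ({1..k-1} - {1..k-2})" using t nt e0 e1 by blast
        then have "t = Inr (k - 1)" using False k by auto
        then show ?thesis using False k by (auto simp: gamma_M_def)
      qed
      then show False using noncomm[OF s(1) tS ne] t by simp
    qed
  qed
  ultimately show ?thesis unfolding inW_def by blast
qed


lemma cw_S: "k \<le> m \<Longrightarrow> 1 \<le> k \<Longrightarrow> set (chain_word k m :: ('a + nat) list) \<subseteq> J (int m)"
  by (auto simp: chain_word_def gamma_S_def)

lemma lemD: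
  assumes k: "1 \<le> k"
  shows "k \<le> m \<Longrightarrow> m \<le> n \<Longrightarrow> inW (J (int k - 1)) x \<Longrightarrow>
    inW (J (int m - 1)) (rev (chain_word k m) @ x @ chain_word k m) \<Longrightarrow> inW (J (int k - 2)) x"
proof (induction m arbitrary: x rule: nat_less_induct)
  case (1 m)
  obtain x' where x': "set x' \<subseteq> J (int k - 1)" "x \<simeq> x'" using "1.prems"(3) by (auto simp: inW_def)
  have JS: "J (int k - 1) \<subseteq> J (int n)" using "1.prems" by (intro J_S) simp
  have x'S: "set x' \<subseteq> J (int n)" using x' JS by blast
  show ?case
  proof (cases "m = k")
    case True
    have cw: "chain_word k m = [Inr k]" using True by (simp add: chain_word_def)
    have sS: "Inr k \<in> J (int n)" using k "1.prems" by (auto simp: gamma_S_def)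
    have "[Inr k] @ x' @ [Inr k] \<simeq> [Inr k] @ x @ [Inr k]"
      using ceq_ctx[OF ceq_sym[OF x'(2)], of "[Inr k]" "[Inr k]"] sS by simp
    moreover have "inW (J (int k - 1)) ([Inr k] @ x @ [Inr k])"
      using "1.prems"(4) unfolding cw unfolding True by simp
    ultimately have "inW (J (int k - 1)) ([Inr k] @ x' @ [Inr k])"
      unfolding inW_def by (blast intro: ceq_trans)
    then have "inW (J (int k - 2)) x'" using lemB'[OF k _ x'(1)] "1.prems" True by simp
    then show ?thesis using x'(2) unfolding inW_def by (blast intro: ceq_trans)
  next
    case False
    then have km: "k < m" using "1.prems" by simp
    define m' where "m' = m - 1"
    have mm: "m = Suc m'" using km by (simp add: m'_def)
    have cw: "chain_word k m = chain_word k m' @ [Inr m]"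
      using km by (simp add: chain_word_def mm)
    define c :: "('a + nat) list" where "c = chain_word k m'"
    have cS: "set c \<subseteq> J (int m - 1)" using cw_S[of k m'] km k by (simp add: c_def mm)
    have JS': "J (int m - 1) \<subseteq> J (int n)" using "1.prems" by (intro J_S) simp
    have Jkm: "J (int k - 1) \<subseteq> J (int m - 1)" using km by (intro gamma_S_mono) simp
    have sS: "Inr m \<in> J (int n)" using km "1.prems" by (auto simp: gamma_S_def)
    define z' where "z' = rev c @ x' @ c"
    have z'J: "set z' \<subseteq> J (int m - 1)" using cS x'(1) Jkm by (auto simp: z'_def)
    have z'S: "set z' \<subseteq> J (int n)" using z'J JS' by blast
    have cnS: "set c \<subseteq> J (int n)" using cS JS' by blast
    have zz: "rev c @ x @ c \<simeq> z'"
      unfolding z'_def using ceq_ctx[OF x'(2), of "rev c" c] cnS by simp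
    have "[Inr m] @ z' @ [Inr m] \<simeq> rev (chain_word k m) @ x @ chain_word k m"
      using ceq_ctx[OF ceq_sym[OF zz], of "[Inr m]" "[Inr m]"] sS by (simp add: cw c_def)
    then have "inW (J (int m - 1)) ([Inr m] @ z' @ [Inr m])"
      using "1.prems"(4) unfolding inW_def by (blast intro: ceq_trans)
    then have "inW (J (int m - 2)) z'" using lemB'[of m z'] km k "1.prems" z'J by simp
    then have "inW (J (int m' - 1)) (rev (chain_word k m') @ x @ chain_word k m')"
      using zz unfolding inW_def c_def by (simp add: mm) (blast intro: ceq_trans)
    moreover have "m' < m" "k \<le> m'" "m' \<le> n" using km "1.prems" by (simp_all add: mm)
    ultimately show ?thesis using "1.IH" "1.prems"(3) by blast
  qed
qed

end

theorem proposition3p3: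
  fixes S0 :: "'a set" and m1 :: "('a + nat) \<Rightarrow> ('a + nat) \<Rightarrow> enat"
    and n i :: nat and \<sigma> \<tau> :: "('a + nat) list"
  assumes "finite S0"
    and "coxeter_matrix (gamma_S S0 m1 1) m1"
    and "1 \<le> n" and "1 \<le> i" and "i \<le> n"
    and "set \<sigma> \<subseteq> gamma_S S0 m1 (int n)" and "set \<tau> \<subseteq> gamma_S S0 m1 (int n)"
    and "\<forall>j\<in>{i..n+1}. in_parabolic S0 m1 n (int n - 1)
            (rev (\<sigma> @ chain_word j n) @ (\<tau> @ chain_word j n))"
  shows "in_parabolic S0 m1 n (int i - 2) (rev \<sigma> @ \<tau>)"
proof -
  interpret gam S0 m1 n using assms(1,2) by unfold_locales
  have par: "in_parabolic S0 m1 n k w = inW (J k) w" for k w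
    by (simp add: in_parabolic_def inW_def)
  define w where "w = rev \<sigma> @ \<tau>"
  have hyp: "inW (J (int n - 1)) (rev (chain_word j n) @ w @ chain_word j n)" if "i \<le> j" "j \<le> n + 1" for j
    using assms(8) that par by (simp add: w_def)
  have main: "d \<le> n + 1 - i \<Longrightarrow> inW (J (int (n + 1 - d) - 2)) w" for d
  proof (induction d)
    case 0
    have "chain_word (n + 1) n = ([] :: ('a + nat) list)" by (simp add: chain_word_def)
    then show ?case using hyp[of "n + 1"] assms(5) by simp
  next
    case (Suc d)
    define j where "j = n - d"
    have j: "1 \<le> j" "j \<le> n" "i \<le> j" using Suc.prems assms(4,5) by (simp_all add: j_def)
    have "inW (J (int j - 1)) w" using Suc j by (simp add: j_def of_nat_diff)
    then have "inW (J (int j - 2)) w" using lemD[OF j(1) j(2) order.refl] hyp[of j] j by simp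
    then show ?case using j by (simp add: j_def of_nat_diff)
  qed
  have "inW (J (int i - 2)) w" using main[of "n + 1 - i"] assms(5) by simp
  then show ?thesis using par by (simp add: w_def)
qed

end
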